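(* In the setting below, for every nonempty $A\subseteq[n]$: $\Pr_{\psi\sim\Psi}(E_1(\psi)\wedge E_2(\psi)\wedge E_3(\psi)\wedge\neg E_4(\psi))\le 2^{-6}$.
   Context: $[N]:=\{0,\dots,N-1\}$. Fix integers $n\ge1$ and real $0<\varepsilon<1$. Let $b:=2^{\lceil\log_2(9\cdot 2^{23}\varepsilon^{-2})\rceil}$ and $k:=\lceil\tfrac{15}{2}\ln b+16\rceil$. Hash families: for $d\ge1$, identify $[2^d]$ with $\mathrm{GF}(2^d)$ via binary representation. For $k'\ge1$, $N\le 2^d$, $c\le d$, $\mathcal H_{k'}([N],[2^c])$ is the uniform distribution over tuples $(a_0,\dots,a_{k'-1})\in\mathrm{GF}(2^d)^{k'}$, each giving $x\mapsto(\sum_ia_ix^i)\bmod 2^c$ on $[N]$; $\mathcal G_{k'}([N])$ is uniform over the same tuples giving $x\mapsto\mathrm{tz}(\sum_ia_ix^i)$, $\mathrm{tz}(y)$ = number of trailing zeros of the $d$-bit representation of $y$ ($\mathrm{tz}(0)=d$). Here $d$ is a fixed integer with $2^d\ge N$, $d\ge c$. $\Psi:=\mathcal G_2([n])\times\mathcal H_2([n],[2^5b^2])\times\mathcal H_k([2^5b^2],[b])$ with the uniform product distribution; $\psi=(f,g,h)$. For fixed nonempty $A\subseteq[n]$: $t(f):=\max_{a\in A}f(a)-\log_2b+9$; $s(f):=\max(0,t(f))$; $R(f):=\{a\in A: f(a)\ge s(f)\}$; $p(\psi):=|\{j\in[b]:\exists a\in A,\ h(g(a))=j,\ f(a)\ge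 s(f)\}|$; $\rho(x):=b(1-(1-b^{-1})^x)$. Events: $E_1(\psi)$: $2^{-16}b\le 2^{-t(f)}|A|\le 2^{-1}b$; $E_2(\psi)$: $\big||R(f)|-2^{-s(f)}|A|\big|\le\frac{\varepsilon}{3}2^{-s(f)}|A|$; $E_3(\psi)$: $g(a)\ne g(a')$ for all distinct $a,a'\in R(f)$; $E_4(\psi)$: $|p(\psi)-\rho(|R(f)|)|\le\frac{\varepsilon}{12}|R(f)|$. *)

theory Defs
  imports "HOL-Library.Z2" "HOL-Computational_Algebra.Polynomial_Factorial"
          "HOL-Probability.Probability"
begin

text \<open>A natural number x in [2^d] is identified with the polynomial over GF(2)
  (type bit) whose i-th coefficient is the i-th binary digit of x. GF(2^d) is
  realised as GF(2)[X]/(P) for an irreducible polynomial P of degree d (the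
  modulus P is a parameter: any such fixed choice).\<close>

definition nat_to_gf2poly :: "nat \<Rightarrow> bit poly" where
  "nat_to_gf2poly x = Poly (map (\<lambda>i. if Bit_Operations.bit x i then 1 else 0) [0..<Suc x])"

definition gf2poly_to_nat :: "bit poly \<Rightarrow> nat" where
  "gf2poly_to_nat q = (\<Sum>i\<le>degree q. if coeff q i = 1 then 2 ^ i else 0)"

definition gf_poly_eval :: "bit poly \<Rightarrow> nat list \<Rightarrow> nat \<Rightarrow> nat" where
  "gf_poly_eval P as x =
     gf2poly_to_nat ((\<Sum>i<length as. nat_to_gf2poly (as ! i) * nat_to_gf2poly x ^ i) mod P)"

definition gf_tuples :: "nat \<Rightarrow> nat \<Rightarrow> nat list set" where
  "gf_tuples d k' = {as. length as = k' \<and> set as \<subseteq> {0..<2 ^ d}}"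

definition tz :: "nat \<Rightarrow> nat \<Rightarrow> nat" where
  "tz d y = (if y = 0 then d else (LEAST i. Bit_Operations.bit y i))"

definition H_fam :: "bit poly \<Rightarrow> nat \<Rightarrow> nat \<Rightarrow> nat \<Rightarrow> (nat \<Rightarrow> nat) pmf" where
  "H_fam P d k' c = map_pmf (\<lambda>as x. gf_poly_eval P as x mod 2 ^ c) (pmf_of_set (gf_tuples d k'))"

definition G_fam :: "bit poly \<Rightarrow> nat \<Rightarrow> nat \<Rightarrow> (nat \<Rightarrow> nat) pmf" where
  "G_fam P d k' = map_pmf (\<lambda>as x. tz d (gf_poly_eval P as x)) (pmf_of_set (gf_tuples d k'))"

definition log_b :: "real \<Rightarrow> nat" where
  "log_b \<epsilon> = nat \<lceil>log 2 (9 * 2 ^ 23 / \<epsilon>\<^sup>2)\<rceil>"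

definition b_param :: "real \<Rightarrow> nat" where
  "b_param \<epsilon> = 2 ^ log_b \<epsilon>"

definition k_param :: "real \<Rightarrow> nat" where
  "k_param \<epsilon> = nat \<lceil>15 / 2 * ln (real (b_param \<epsilon>)) + 16\<rceil>"

definition t_val :: "real \<Rightarrow> nat set \<Rightarrow> (nat \<Rightarrow> nat) \<Rightarrow> int" where
  "t_val \<epsilon> A f = int (Max (f ` A)) - int (log_b \<epsilon>) + 9"

definition s_val :: "real \<Rightarrow> nat set \<Rightarrow> (nat \<Rightarrow> nat) \<Rightarrow> nat" where
  "s_val \<epsilon> A f = nat (max 0 (t_val \<epsilon> A f))"

definition R_set :: "real \<Rightarrow> nat set \<Rightarrow> (nat \<Rightarrow> nat) \<Rightarrow> nat set" where
  "R_set \<epsilon> A f = {a \<in> A. f a \<ge> s_val \<epsilon> A f}"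

definition p_val :: "real \<Rightarrow> nat set \<Rightarrow> (nat \<Rightarrow> nat) \<times> (nat \<Rightarrow> nat) \<times> (nat \<Rightarrow> nat) \<Rightarrow> nat" where
  "p_val \<epsilon> A \<psi> = (case \<psi> of (f, g, h) \<Rightarrow>
     card {j \<in> {0..<b_param \<epsilon>}. \<exists>a \<in> A. h (g a) = j \<and> f a \<ge> s_val \<epsilon> A f})"

definition rho :: "real \<Rightarrow> nat \<Rightarrow> real" where
  "rho \<epsilon> x = real (b_param \<epsilon>) * (1 - (1 - 1 / real (b_param \<epsilon>)) ^ x)"

definition E1 :: "real \<Rightarrow> nat set \<Rightarrow> (nat \<Rightarrow> nat) \<times> (nat \<Rightarrow> nat) \<times> (nat \<Rightarrow> nat) \<Rightarrow> bool" where
  "E1 \<epsilon> A \<psi> = (case \<psi> of (f, g, h) \<Rightarrow>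
     2 powr (-16) * real (b_param \<epsilon>) \<le> 2 powr (- real_of_int (t_val \<epsilon> A f)) * real (card A) \<and>
     2 powr (- real_of_int (t_val \<epsilon> A f)) * real (card A) \<le> 2 powr (-1) * real (b_param \<epsilon>))"

definition E2 :: "real \<Rightarrow> nat set \<Rightarrow> (nat \<Rightarrow> nat) \<times> (nat \<Rightarrow> nat) \<times> (nat \<Rightarrow> nat) \<Rightarrow> bool" where
  "E2 \<epsilon> A \<psi> = (case \<psi> of (f, g, h) \<Rightarrow>
     \<bar>real (card (R_set \<epsilon> A f)) - 2 powr (- real (s_val \<epsilon> A f)) * real (card A)\<bar>
       \<le> \<epsilon> / 3 * 2 powr (- real (s_val \<epsilon> A f)) * real (card A))"

definition E3 :: "real \<Rightarrow> nat set \<Rightarrow> (nat \<Rightarrow> nat) \<times> (nat \<Rightarrow> nat) \<times> (nat \<Rightarrow> nat) \<Rightarrow> bool" where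
  "E3 \<epsilon> A \<psi> = (case \<psi> of (f, g, h) \<Rightarrow>
     (\<forall>a \<in> R_set \<epsilon> A f. \<forall>a' \<in> R_set \<epsilon> A f. a \<noteq> a' \<longrightarrow> g a \<noteq> g a'))"

definition E4 :: "real \<Rightarrow> nat set \<Rightarrow> (nat \<Rightarrow> nat) \<times> (nat \<Rightarrow> nat) \<times> (nat \<Rightarrow> nat) \<Rightarrow> bool" where
  "E4 \<epsilon> A \<psi> = (case \<psi> of (f, g, h) \<Rightarrow>
     \<bar>real (p_val \<epsilon> A \<psi>) - rho \<epsilon> ((card (R_set \<epsilon> A f)))\<bar>
       \<le> \<epsilon> / 12 * real (card (R_set \<epsilon> A f)))"

end

theory Submission
  imports Defs
begin


lemma bit_nat_large: "x < 2 ^ i \<Longrightarrow> \<not> Bit_Operations.bit (x::nat) i"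
  unfolding bit_iff_odd by simp

lemma coeff_nat_to_gf2poly:
  "coeff (nat_to_gf2poly x) i = (if Bit_Operations.bit x i then 1 else 0)"
proof (cases "i < Suc x")
  case True
  then show ?thesis unfolding nat_to_gf2poly_def
    by (simp add: nth_default_def del: upt_Suc)
next
  case False
  have "x < 2 ^ x" by (rule less_exp)
  also have "\<dots> \<le> 2 ^ i" using False by simp
  finally have "\<not> Bit_Operations.bit x i" by (rule bit_nat_large)
  then show ?thesis using False unfolding nat_to_gf2poly_def
    by (simp add: nth_default_def)
qed

lemma nat_to_gf2poly_inj: "nat_to_gf2poly x = nat_to_gf2poly y \<Longrightarrow> x = y"
proof -
  assume a: "nat_to_gf2poly x = nat_to_gf2poly y"
  have "\<forall>i. Bit_Operations.bit x i = Bit_Operations.bit y i"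
  proof
    fix i
    have "coeff (nat_to_gf2poly x) i = coeff (nat_to_gf2poly y) i" using a by simp
    then show "Bit_Operations.bit x i = Bit_Operations.bit y i"
      unfolding coeff_nat_to_gf2poly by (auto split: if_splits)
  qed
  then show "x = y" by (simp add: bit_eq_iff)
qed

lemma degree_nat_to_gf2poly: "x < 2 ^ d \<Longrightarrow> 0 < d \<Longrightarrow> degree (nat_to_gf2poly x) < d"
proof -
  assume x: "x < 2 ^ d" and d: "0 < d"
  have "degree (nat_to_gf2poly x) \<le> d - 1"
  proof (rule degree_le, intro allI impI)
    fix i assume "d - 1 < i"
    then have "d \<le> i" using d by simp
    then have "(2::nat) ^ d \<le> 2 ^ i" by (simp add: power_increasing)
    then have "x < 2 ^ i" using x by linarith
    then show "coeff (nat_to_gf2poly x) i = 0"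
      unfolding coeff_nat_to_gf2poly using bit_nat_large by simp
  qed
  then show ?thesis using d by simp
qed

definition s2 :: "bit poly \<Rightarrow> nat \<Rightarrow> nat" where
  "s2 q N = (\<Sum>i<N. if coeff q i = 1 then 2 ^ i else 0)"

lemma s2_less: "s2 q N < 2 ^ N"
proof (induction N)
  case 0 then show ?case by (simp add: s2_def)
next
  case (Suc N)
  have "s2 q (Suc N) = s2 q N + (if coeff q N = 1 then 2 ^ N else 0)"
    by (simp add: s2_def)
  also have "\<dots> < 2 ^ N + 2 ^ N" using Suc by auto
  finally show ?case by simp
qed

lemma s2_inj: "s2 q N = s2 q' N \<Longrightarrow> i < N \<Longrightarrow> coeff q i = coeff q' i"
proof (induction N)
  case 0 then show ?case by simp
next
  case (Suc N)
  have e: "s2 q (Suc N) = s2 q N + (if coeff q N = 1 then 2 ^ N else 0)"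
          "s2 q' (Suc N) = s2 q' N + (if coeff q' N = 1 then 2 ^ N else 0)"
    by (simp_all add: s2_def)
  have l: "s2 q N < 2 ^ N" "s2 q' N < 2 ^ N" by (rule s2_less)+
  define c where "c = (if coeff q N = 1 then 1 else (0::nat))"
  define c' where "c' = (if coeff q' N = 1 then 1 else (0::nat))"
  have e1: "s2 q (Suc N) = s2 q N + c * 2 ^ N" using e(1) by (simp add: c_def)
  have e2: "s2 q' (Suc N) = s2 q' N + c' * 2 ^ N" using e(2) by (simp add: c'_def)
  have m1: "s2 q (Suc N) mod 2 ^ N = s2 q N" using l(1) unfolding e1 by simp
  have m2: "s2 q' (Suc N) mod 2 ^ N = s2 q' N" using l(2) unfolding e2 by simp
  have eqN: "s2 q N = s2 q' N" using m1 m2 Suc.prems(1) by simp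
  have d1: "s2 q (Suc N) div 2 ^ N = c" using l(1) unfolding e1 by simp
  have d2: "s2 q' (Suc N) div 2 ^ N = c'" using l(2) unfolding e2 by simp
  have "c = c'" using d1 d2 Suc.prems(1) by simp
  have cN: "coeff q N = coeff q' N" using \<open>c = c'\<close> unfolding c_def c'_def
    by (cases "coeff q N"; cases "coeff q' N") auto
  show ?case
  proof (cases "i < N")
    case True then show ?thesis using Suc.IH eqN by simp
  next
    case False then have "i = N" using Suc.prems(2) by simp
    then show ?thesis using cN by simp
  qed
qed

lemma gf2poly_to_nat_s2: "degree q < N \<Longrightarrow> gf2poly_to_nat q = s2 q N"
proof -
  assume a: "degree q < N"
  have "s2 q N = (\<Sum>i\<in>{..degree q} \<union> {degree q<..<N}. if coeff q i = 1 then 2 ^ i else 0)"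
    unfolding s2_def using a by (intro sum.cong) auto
  also have "\<dots> = gf2poly_to_nat q + (\<Sum>i\<in>{degree q<..<N}. if coeff q i = 1 then 2 ^ i else 0)"
    unfolding gf2poly_to_nat_def by (subst sum.union_disjoint) auto
  also have "(\<Sum>i\<in>{degree q<..<N}. if coeff q i = 1 then 2 ^ i else 0) = (0::nat)"
    by (intro sum.neutral) (auto simp: coeff_eq_0)
  finally show ?thesis by simp
qed

lemma gf2poly_to_nat_inj: "gf2poly_to_nat q = gf2poly_to_nat q' \<Longrightarrow> q = q'"
proof -
  assume a: "gf2poly_to_nat q = gf2poly_to_nat q'"
  define N where "N = Suc (max (degree q) (degree q'))"
  have "s2 q N = s2 q' N" using a gf2poly_to_nat_s2[of q N] gf2poly_to_nat_s2[of q' N]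
    unfolding N_def by simp
  show "q = q'"
  proof (rule poly_eqI)
    fix i show "coeff q i = coeff q' i"
    proof (cases "i < N")
      case True then show ?thesis using s2_inj \<open>s2 q N = s2 q' N\<close> by blast
    next
      case False then show ?thesis unfolding N_def by (simp add: coeff_eq_0)
    qed
  qed
qed

lemma gf2poly_to_nat_less: "degree q < N \<Longrightarrow> gf2poly_to_nat q < 2 ^ N"
  using gf2poly_to_nat_s2 s2_less by metis



lemma coeff_lin_mult: "coeff ([:a, 1:] * (E :: bit poly poly)) i = a * coeff E i + (case i of 0 \<Rightarrow> 0 | Suc j \<Rightarrow> coeff E j)"
  by (cases i) (auto simp add: mult_pCons_left coeff_pCons)

lemma roots_dvd:
  fixes P :: "bit poly" and Q :: "bit poly poly"
  assumes pr: "prime_elem P"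
  shows "finite Z \<Longrightarrow> card Z = k \<Longrightarrow> (\<forall>z\<in>Z. degree z < degree P) \<Longrightarrow>
    (\<forall>i\<ge>k. coeff Q i = 0) \<Longrightarrow> (\<forall>z\<in>Z. P dvd poly Q z) \<Longrightarrow> P dvd coeff Q i"
proof (induction k arbitrary: Q Z i)
  case 0
  then have "Q = 0" by (intro poly_eqI) simp
  then show ?case by simp
next
  case (Suc k)
  then obtain z0 where z0: "z0 \<in> Z" by (metis card.empty ex_in_conv nat.distinct(1))
  define E where "E = synthetic_div Q z0"
  have degQ: "degree Q \<le> k" using Suc.prems(4) by (intro degree_le) auto
  have Ek: "\<forall>i\<ge>k. coeff E i = 0"
  proof (cases "degree Q = 0")
    case True then have "E = 0" unfolding E_def using synthetic_div_eq_0_iff by blast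
    then show ?thesis by simp
  next
    case False then have "degree E < k" unfolding E_def degree_synthetic_div using degQ by linarith
    then show ?thesis by (auto intro: coeff_eq_0)
  qed
  have QE: "Q = [:-z0, 1:] * E + [:poly Q z0:]" unfolding E_def by (rule synthetic_div_correct'[symmetric])
  have pE: "P dvd poly E z" if z: "z \<in> Z - {z0}" for z
  proof -
    have "poly Q z = (z - z0) * poly E z + poly Q z0"
      by (subst QE) (simp add: algebra_simps)
    then have "P dvd (z - z0) * poly E z"
      using Suc.prems(5) z z0 by (metis DiffD1 add_diff_cancel dvd_diff)
    moreover have "\<not> P dvd (z - z0)"
    proof
      assume "P dvd (z - z0)"
      moreover have "z - z0 \<noteq> 0" using z by simp
      ultimately have "degree P \<le> degree (z - z0)" by (rule dvd_imp_degree_le)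
      moreover have "degree (z - z0) < degree P"
        using Suc.prems(3) z z0 degree_diff_le_max[of z z0]
        by (metis DiffD1 max_def order_le_less_trans)
      ultimately show False by simp
    qed
    ultimately show ?thesis using pr prime_elem_dvd_mult_iff by blast
  qed
  have IH: "P dvd coeff E j" for j
    using Suc.IH[of "Z - {z0}" E j] Suc.prems z0 Ek pE by simp
  have "P dvd poly Q z0" using Suc.prems(5) z0 by blast
  then show ?case
    by (subst QE) (cases i; auto simp: coeff_pCons IH intro!: dvd_add dvd_diff dvd_mult)
qed



definition Qas :: "nat list \<Rightarrow> bit poly poly" where
  "Qas as = (\<Sum>i<length as. monom (nat_to_gf2poly (as ! i)) i)"

lemma poly_Qas: "poly (Qas as) z = (\<Sum>i<length as. nat_to_gf2poly (as ! i) * z ^ i)"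
  unfolding Qas_def by (simp add: poly_sum poly_monom)

lemma gf_poly_eval_Qas: "gf_poly_eval P as x = gf2poly_to_nat (poly (Qas as) (nat_to_gf2poly x) mod P)"
  unfolding gf_poly_eval_def poly_Qas ..

lemma irr_deg: "irreducible (P::bit poly) \<Longrightarrow> degree P > 0"
  by (metis gr0I irreducible_def is_unit_iff_degree)

lemma gf_poly_eval_less:
  assumes "irreducible P" "degree P = d"
  shows "gf_poly_eval P as x < 2 ^ d"
proof -
  have P0: "P \<noteq> 0" using assms(1) by auto
  have "degree (poly (Qas as) (nat_to_gf2poly x) mod P) < d"
    using degree_mod_less[OF P0, of "poly (Qas as) (nat_to_gf2poly x)"] irr_deg[OF assms(1)] assms(2)
    by auto
  then show ?thesis unfolding gf_poly_eval_Qas by (rule gf2poly_to_nat_less)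
qed

lemma gf_eval_inj:
  assumes irr: "irreducible P" and dP: "degree P = d"
    and T: "T \<subseteq> {0..<2^d}" "card T = k"
    and as: "as \<in> gf_tuples d k" and bs: "bs \<in> gf_tuples d k"
    and eq: "\<forall>x\<in>T. gf_poly_eval P as x = gf_poly_eval P bs x"
  shows "as = bs"
proof -
  have d0: "d > 0" using irr_deg[OF irr] dP by simp
  have la: "length as = k" and lb: "length bs = k" using as bs by (auto simp: gf_tuples_def)
  have ra: "as ! i < 2 ^ d" if "i < k" for i using as that la unfolding gf_tuples_def
    by (metis (no_types, lifting) atLeastLessThan_iff mem_Collect_eq nth_mem subsetD)
  have rb: "bs ! i < 2 ^ d" if "i < k" for i using bs that lb unfolding gf_tuples_def
    by (metis (no_types, lifting) atLeastLessThan_iff mem_Collect_eq nth_mem subsetD)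
  define c where "c i = nat_to_gf2poly (as ! i) - nat_to_gf2poly (bs ! i)" for i
  define Q where "Q = Qas as - Qas bs"
  have cQ: "coeff Q i = (if i < k then c i else 0)" for i
    unfolding Q_def Qas_def c_def la lb by (simp add: coeff_sum coeff_monom)
  define Z where "Z = nat_to_gf2poly ` T"
  have finT: "finite T" using T(1) finite_subset by blast
  have inj: "inj_on nat_to_gf2poly T" by (meson inj_onI nat_to_gf2poly_inj)
  have cZ: "card Z = k" unfolding Z_def using card_image[OF inj] T(2) by simp
  have fZ: "finite Z" unfolding Z_def using finT by simp
  have dZ: "\<forall>z\<in>Z. degree z < degree P"
    unfolding Z_def dP using T(1) degree_nat_to_gf2poly d0 by auto
  have pZ: "\<forall>z\<in>Z. P dvd poly Q z"
  proof
    fix z assume "z \<in> Z"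
    then obtain x where x: "x \<in> T" "z = nat_to_gf2poly x" unfolding Z_def by auto
    have "poly (Qas as) z mod P = poly (Qas bs) z mod P"
      using eq x gf2poly_to_nat_inj unfolding gf_poly_eval_Qas by metis
    then show "P dvd poly Q z" unfolding Q_def by (simp add: mod_eq_dvd_iff)
  qed
  have kk: "\<forall>i\<ge>k. coeff Q i = 0" using cQ by simp
  have prP: "prime_elem P" by (rule field_poly_irreducible_imp_prime[OF irr])
  have dv: "P dvd c i" if "i < k" for i
    using roots_dvd[OF prP fZ cZ dZ kk pZ, of i] cQ that by simp
  have c0: "c i = 0" if "i < k" for i
  proof (rule ccontr)
    assume "c i \<noteq> 0"
    then have "degree P \<le> degree (c i)" using dv[OF that] dvd_imp_degree_le by blast
    moreover have "degree (c i) < d"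
      unfolding c_def using degree_diff_le_max[of "nat_to_gf2poly (as ! i)" "nat_to_gf2poly (bs ! i)"]
        degree_nat_to_gf2poly[OF ra[OF that] d0] degree_nat_to_gf2poly[OF rb[OF that] d0]
      by linarith
    ultimately show False using dP by simp
  qed
  show "as = bs"
  proof (rule nth_equalityI)
    show "length as = length bs" using la lb by simp
    fix i assume "i < length as"
    then have "i < k" using la by simp
    then show "as ! i = bs ! i" using c0 nat_to_gf2poly_inj unfolding c_def by simp
  qed
qed

lemma card_gf_tuples: "card (gf_tuples d k) = (2 ^ d) ^ k"
  unfolding gf_tuples_def using card_lists_length_eq[of "{0..<2^d::nat}" k]
  by (simp add: conj_commute)

lemma finite_gf_tuples: "finite (gf_tuples d k)"
  unfolding gf_tuples_def using finite_lists_length_eq[of "{0..<2^d::nat}" k]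
  by (simp add: conj_commute)

lemma gf_tuples_ne: "gf_tuples d k \<noteq> {}"
proof -
  have "replicate k 0 \<in> gf_tuples d k" unfolding gf_tuples_def by auto
  then show ?thesis by auto
qed

lemma hash_count:
  assumes irr: "irreducible P" and dP: "degree P = d"
    and T: "T \<subseteq> {0..<2^d}" "card T \<le> k" and kd: "k \<le> 2 ^ d"
    and C: "C \<subseteq> {0..<2^d}"
  shows "card {as \<in> gf_tuples d k. \<forall>x\<in>T. gf_poly_eval P as x \<in> C}
         = card C ^ card T * (2 ^ d) ^ (k - card T)"
proof -
  have finT: "finite T" using T(1) finite_subset by blast
  have "k - card T \<le> card ({0..<2^d} - T)"
    using T kd card_Diff_subset[OF finT T(1)] by simp
  then obtain T2 where T2: "T2 \<subseteq> {0..<2^d} - T" "card T2 = k - card T"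
    by (meson obtain_subset_with_card_n)
  define T' where "T' = T \<union> T2"
  have finT2: "finite T2" using T2(1) finite_subset by blast
  have T'1: "T' \<subseteq> {0..<2^d}" using T T2 unfolding T'_def by auto
  have T'2: "card T' = k" unfolding T'_def using T2 T finT finT2
    by (subst card_Un_disjoint) auto
  have finT': "finite T'" using finT finT2 unfolding T'_def by simp
  define Tup where "Tup = gf_tuples d k"
  define \<Phi> where "\<Phi> as = restrict (gf_poly_eval P as) T'" for as
  define F where "F = PiE T' (\<lambda>_. {0..<(2::nat)^d})"
  have inj: "inj_on \<Phi> Tup"
  proof (rule inj_onI)
    fix as bs assume "as \<in> Tup" "bs \<in> Tup" "\<Phi> as = \<Phi> bs"
    then show "as = bs" using gf_eval_inj[OF irr dP T'1 T'2] unfolding Tup_def \<Phi>_def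
      by (metis restrict_apply')
  qed
  have sub: "\<Phi> ` Tup \<subseteq> F"
    unfolding F_def \<Phi>_def using gf_poly_eval_less[OF irr dP] by auto
  have cF: "card F = (2 ^ d) ^ k" unfolding F_def using finT' T'2
    by (simp add: card_PiE)
  have finF: "finite F" unfolding F_def using finT' by (simp add: finite_PiE)
  have imF: "\<Phi> ` Tup = F"
    using card_subset_eq[OF finF sub] card_image[OF inj] cF card_gf_tuples unfolding Tup_def
    by simp
  define W where "W = PiE T' (\<lambda>x. if x \<in> T then C else {0..<(2::nat)^d})"
  have WF: "W \<subseteq> F" unfolding W_def F_def using C
    by (auto simp: PiE_iff) (metis atLeastLessThan_iff subsetD)
  have set_eq: "{as \<in> Tup. \<forall>x\<in>T. gf_poly_eval P as x \<in> C} = {as \<in> Tup. \<Phi> as \<in> W}"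
  proof -
    have "\<Phi> as \<in> W \<longleftrightarrow> (\<forall>x\<in>T. gf_poly_eval P as x \<in> C)" if "as \<in> Tup" for as
    proof -
      have "\<Phi> as \<in> F" using sub that by auto
      then show ?thesis unfolding W_def F_def \<Phi>_def using T'_def
        by (auto simp: PiE_iff)
    qed
    then show ?thesis by auto
  qed
  have "card {as \<in> Tup. \<Phi> as \<in> W} = card (\<Phi> ` {as \<in> Tup. \<Phi> as \<in> W})"
    by (rule card_image[symmetric]) (rule inj_on_subset[OF inj], auto)
  also have "\<Phi> ` {as \<in> Tup. \<Phi> as \<in> W} = W" using imF WF by auto
  also have "card W = (\<Prod>x\<in>T'. card (if x \<in> T then C else {0..<(2::nat)^d}))"
    unfolding W_def using finT' by (simp add: card_PiE)
  also have "\<dots> = (\<Prod>x\<in>T. card C) * (\<Prod>x\<in>T2. card {0..<(2::nat)^d})"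
  proof -
    have dj: "T \<inter> T2 = {}" using T2(1) by auto
    have "(\<Prod>x\<in>T'. card (if x \<in> T then C else {0..<(2::nat)^d}))
       = (\<Prod>x\<in>T. card (if x \<in> T then C else {0..<(2::nat)^d})) * (\<Prod>x\<in>T2. card (if x \<in> T then C else {0..<(2::nat)^d}))"
      unfolding T'_def using finT finT2 dj by (rule prod.union_disjoint)
    also have "(\<Prod>x\<in>T. card (if x \<in> T then C else {0..<(2::nat)^d})) = (\<Prod>x\<in>T. card C)"
      by (rule prod.cong) auto
    also have "(\<Prod>x\<in>T2. card (if x \<in> T then C else {0..<(2::nat)^d})) = (\<Prod>x\<in>T2. card {0..<(2::nat)^d})"
      using dj by (intro prod.cong) auto
    finally show ?thesis .
  qed
  also have "\<dots> = card C ^ card T * (2 ^ d) ^ (k - card T)" using T2(2) by simp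
  finally show ?thesis unfolding Tup_def set_eq[unfolded Tup_def] .
qed



lemma choose_fact_le: "fact i * (m choose i) \<le> (m::nat) ^ i"
proof (cases "i \<le> m")
  case True
  have e: "fact m = (fact i * (m choose i)) * fact (m - i)"
    using binomial_fact_lemma[OF True] by (simp add: algebra_simps)
  have "fact m div fact (m - i) = fact i * (m choose i)"
    by (subst e) simp
  then show ?thesis using fact_div_fact_le_pow[OF True] by simp
next
  case False then show ?thesis by (simp add: binomial_eq_0)
qed

lemma choose_le_real: "real (m choose i) \<le> real m ^ i / fact i"
proof -
  have "real (fact i * (m choose i)) \<le> real (m ^ i)" using choose_fact_le by (rule of_nat_mono)
  then have "fact i * real (m choose i) \<le> real m ^ i" by simp
  then show ?thesis by (simp add: field_simps)
qed

lemma pow_fact_mono: "k \<le> i \<Longrightarrow> 1 \<le> k \<Longrightarrow> (2::real) ^ i / fact i \<le> 2 ^ k / fact k"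
proof (induction i rule: dec_induct)
  case base then show ?case by simp
next
  case (step i)
  have "(2::real) ^ Suc i / fact (Suc i) = (2 ^ i / fact i) * (2 / (Suc i))"
    by (simp add: field_simps)
  also have "\<dots> \<le> (2 ^ i / fact i) * 1"
    using step by (intro mult_left_mono) auto
  finally show ?case using step by simp
qed

lemma term_bound:
  assumes "k \<le> i" "2 \<le> k" "m \<le> b" "0 < b" "0 \<le> y" "y \<le> 2 / real b"
  shows "real (m choose i) * y ^ i \<le> (real m / b) ^ 2 * (2 ^ k / fact k)"
proof -
  have "real (m choose i) * y ^ i \<le> (real m ^ i / fact i) * (2 / real b) ^ i"
    using assms by (intro mult_mono choose_le_real power_mono) auto
  also have "\<dots> = (2 ^ i / fact i) * (real m / b) ^ i"
    by (simp add: power_divide field_simps power_mult_distrib)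
  also have "\<dots> \<le> (2 ^ k / fact k) * (real m / b) ^ 2"
  proof (intro mult_mono pow_fact_mono)
    have "real m / b \<le> 1" using assms by simp
    then show "(real m / b) ^ i \<le> (real m / b) ^ 2"
      using assms by (intro power_decreasing) auto
  qed (use assms in auto)
  finally show ?thesis by (simp add: algebra_simps)
qed

lemma card_filter_sum: "finite A \<Longrightarrow> real (card {x\<in>A. P x}) = (\<Sum>x\<in>A. if P x then 1 else 0)"
  by (simp add: sum.inter_filter[symmetric])

lemma altsum: "t \<ge> 1 \<Longrightarrow> (\<Sum>i<Suc l. (-1)^i * real (t choose i)) = (-1)^l * real ((t-1) choose l)"
proof (induction l)
  case 0 then show ?case by simp
next
  case (Suc l)
  obtain t' where t: "t = Suc t'" using Suc.prems by (cases t) auto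
  have "(\<Sum>i<Suc (Suc l). (-1)^i * real (t choose i)) = (-1)^l * real (t' choose l) + (-1)^(Suc l) * real (t choose Suc l)"
    using Suc by (simp add: t)
  also have "real (t choose Suc l) = real (t' choose l) + real (t' choose Suc l)" unfolding t by simp
  finally show ?case by (simp add: t algebra_simps)
qed

lemma bonf:
  fixes t k :: nat assumes "k \<ge> 1"
  shows "\<bar>(if t = 0 then 1 else 0) - (\<Sum>i<k. (-1)^i * real (t choose i))\<bar> \<le> real (t choose k)"
proof (cases "t = 0")
  case True
  have "(\<Sum>i<k. (-1)^i * real (t choose i)) = (\<Sum>i\<in>{0}. (-1)^i * real (t choose i))"
    using True assms by (intro sum.mono_neutral_right) auto
  then show ?thesis using True by simp
next
  case False
  obtain l where k: "k = Suc l" using assms by (cases k) auto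
  obtain t' where t: "t = Suc t'" using False by (cases t) auto
  have "(\<Sum>i<k. (-1)^i * real (t choose i)) = (-1)^l * real (t' choose l)"
    using altsum[of t l] unfolding k t by simp
  then have "\<bar>(if t = 0 then 1 else 0) - (\<Sum>i<k. (-1)^i * real (t choose i))\<bar> = real (t' choose l)"
    using False by (simp add: abs_mult power_abs)
  also have "\<dots> \<le> real (t choose k)" unfolding t k by simp
  finally show ?thesis .
qed



definition HP :: "'w set \<Rightarrow> ('w \<Rightarrow> nat \<Rightarrow> nat) \<Rightarrow> nat set \<Rightarrow> nat \<Rightarrow> nat \<Rightarrow> bool" where
  "HP \<Omega> hv D b k \<longleftrightarrow> (\<forall>T B. T \<subseteq> D \<longrightarrow> card T \<le> k \<longrightarrow> B \<subseteq> {0..<b} \<longrightarrow>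
     real (card {w\<in>\<Omega>. \<forall>x\<in>T. hv w x \<in> B}) = real (card \<Omega>) * (real (card B) / real b) ^ (card T))"

lemma moment:
  assumes fO: "finite \<Omega>" and hp: "HP \<Omega> hv D b k" and fU: "finite U" and UD: "U \<subseteq> D"
    and ik: "i \<le> k" and B: "B \<subseteq> {0..<b}"
  shows "(\<Sum>w\<in>\<Omega>. real (card {u\<in>U. hv w u \<in> B} choose i))
       = real (card \<Omega>) * real (card U choose i) * (real (card B) / b) ^ i"
proof -
  define S where "S = {V. V \<subseteq> U \<and> card V = i}"
  have fS: "finite S" unfolding S_def using fU by simp
  have e1: "card {u\<in>U. hv w u \<in> B} choose i = card {V\<in>S. \<forall>u\<in>V. hv w u \<in> B}" for w
  proof -
    have "card {u\<in>U. hv w u \<in> B} choose i = card {V. V \<subseteq> {u\<in>U. hv w u \<in> B} \<and> card V = i}"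
      using fU by (intro n_subsets[symmetric]) auto
    also have "{V. V \<subseteq> {u\<in>U. hv w u \<in> B} \<and> card V = i} = {V\<in>S. \<forall>u\<in>V. hv w u \<in> B}"
      unfolding S_def by auto
    finally show ?thesis .
  qed
  have "(\<Sum>w\<in>\<Omega>. real (card {u\<in>U. hv w u \<in> B} choose i))
      = (\<Sum>w\<in>\<Omega>. \<Sum>V\<in>S. if (\<forall>u\<in>V. hv w u \<in> B) then 1 else 0)"
    unfolding e1 using fS by (simp add: card_filter_sum)
  also have "\<dots> = (\<Sum>V\<in>S. \<Sum>w\<in>\<Omega>. if (\<forall>u\<in>V. hv w u \<in> B) then 1 else 0)"
    by (rule sum.swap)
  also have "\<dots> = (\<Sum>V\<in>S. real (card {w\<in>\<Omega>. \<forall>u\<in>V. hv w u \<in> B}))"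
    using fO by (simp add: card_filter_sum)
  also have "\<dots> = (\<Sum>V\<in>S. real (card \<Omega>) * (real (card B) / b) ^ i)"
  proof (rule sum.cong)
    fix V assume "V \<in> S"
    then have "V \<subseteq> D" "card V = i" using UD unfolding S_def by auto
    then show "real (card {w\<in>\<Omega>. \<forall>u\<in>V. hv w u \<in> B}) = real (card \<Omega>) * (real (card B) / b) ^ i"
      using hp ik B unfolding HP_def by auto
  qed simp
  also have "\<dots> = real (card S) * (real (card \<Omega>) * (real (card B) / b) ^ i)" by simp
  also have "card S = card U choose i" unfolding S_def using fU by (rule n_subsets)
  finally show ?thesis by simp
qed

lemma empty_prob:
  assumes fO: "finite \<Omega>" and hp: "HP \<Omega> hv D b k" and fU: "finite U" and UD: "U \<subseteq> D"
    and m: "card U = m" and B: "B \<subseteq> {0..<b}" "card B \<le> 2" and k2: "2 \<le> k" and mb: "m \<le> b"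
    and b0: "0 < b"
  shows "\<bar>(\<Sum>w\<in>\<Omega>. if (\<forall>u\<in>U. hv w u \<notin> B) then 1 else 0) - real (card \<Omega>) * (1 - real (card B) / b) ^ m\<bar>
    \<le> real (card \<Omega>) * (2 * (real m ^ 2 * 2 ^ k / (fact k * real b)))"
proof -
  define N where "N = real (card \<Omega>)"
  define y where "y = real (card B) / b"
  define t where "t w = card {u\<in>U. hv w u \<in> B}" for w
  define \<tau> where "\<tau> = (real m / b) ^ 2 * (2 ^ k / fact k)"
  define f where "f i = (-1)^i * real (m choose i) * y ^ i" for i
  have y0: "0 \<le> y" and y2: "y \<le> 2 / real b" using B b0 unfolding y_def by (auto simp: divide_right_mono)
  have tau0: "0 \<le> \<tau>" unfolding \<tau>_def by simp
  have N0: "0 \<le> N" unfolding N_def by simp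
  have ev: "(\<forall>u\<in>U. hv w u \<notin> B) \<longleftrightarrow> t w = 0" for w
  proof -
    have "finite {u\<in>U. hv w u \<in> B}" using fU by simp
    then have "t w = 0 \<longleftrightarrow> {u\<in>U. hv w u \<in> B} = {}" unfolding t_def by simp
    then show ?thesis by blast
  qed
  define A where "A = (\<Sum>w\<in>\<Omega>. if t w = 0 then 1 else (0::real))"
  define Tk where "Tk = (\<Sum>w\<in>\<Omega>. \<Sum>i<k. (-1)^i * real (t w choose i))"
  have Tk_eq: "Tk = N * (\<Sum>i<k. f i)"
  proof -
    have "Tk = (\<Sum>i<k. (-1)^i * (\<Sum>w\<in>\<Omega>. real (t w choose i)))"
      unfolding Tk_def by (subst sum.swap) (simp add: sum_distrib_left)
    also have "\<dots> = (\<Sum>i<k. (-1)^i * (N * real (m choose i) * y ^ i))"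
      unfolding t_def N_def y_def using moment[OF fO hp fU UD _ B(1)] m by (intro sum.cong) auto
    finally show ?thesis unfolding f_def by (simp add: sum_distrib_left algebra_simps)
  qed
  have ATk: "\<bar>A - Tk\<bar> \<le> N * real (m choose k) * y ^ k"
  proof -
    have "\<bar>A - Tk\<bar> = \<bar>\<Sum>w\<in>\<Omega>. (if t w = 0 then 1 else 0) - (\<Sum>i<k. (-1)^i * real (t w choose i))\<bar>"
      unfolding A_def Tk_def by (simp add: sum_subtractf)
    also have "\<dots> \<le> (\<Sum>w\<in>\<Omega>. \<bar>(if t w = 0 then 1 else 0) - (\<Sum>i<k. (-1)^i * real (t w choose i))\<bar>)"
      by (rule sum_abs)
    also have "\<dots> \<le> (\<Sum>w\<in>\<Omega>. real (t w choose k))"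
      using k2 by (intro sum_mono bonf) auto
    also have "\<dots> = N * real (m choose k) * y ^ k"
      unfolding t_def N_def y_def using moment[OF fO hp fU UD _ B(1)] m by auto
    finally show ?thesis .
  qed
  have binom: "(1 - y) ^ m = (\<Sum>i\<le>m. f i)"
  proof -
    have "(-y + 1) ^ m = (\<Sum>i\<le>m. real (m choose i) * (-y) ^ i * 1 ^ (m - i))"
      by (rule binomial_ring)
    also have "\<dots> = (\<Sum>i\<le>m. f i)"
    proof (intro sum.cong refl)
      fix i
      have "(-y) ^ i = (-1) ^ i * y ^ i" by (metis mult_minus1 power_mult_distrib)
      then show "real (m choose i) * (-y) ^ i * 1 ^ (m - i) = f i" unfolding f_def by simp
    qed
    finally show ?thesis by simp
  qed
  have f0: "f i = 0" if "i > m" for i using that unfolding f_def by (simp add: binomial_eq_0)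
  have "(\<Sum>i\<le>m. f i) = (\<Sum>i<k+m+1. f i)"
    using f0 by (intro sum.mono_neutral_left) auto
  also have "\<dots> = (\<Sum>i<k. f i) + (\<Sum>i\<in>{k..<k+m+1}. f i)"
  proof -
    have "{..<k+m+1} = {..<k} \<union> {k..<k+m+1}" by auto
    moreover have "sum f ({..<k} \<union> {k..<k+m+1}) = sum f {..<k} + sum f {k..<k+m+1}"
      by (rule sum.union_disjoint) auto
    ultimately show ?thesis by simp
  qed
  finally have split: "(1 - y) ^ m = (\<Sum>i<k. f i) + (\<Sum>i\<in>{k..<k+m+1}. f i)" using binom by simp
  have fb: "\<bar>f i\<bar> \<le> (if i \<le> m then \<tau> else 0)" if "k \<le> i" for i
  proof (cases "i \<le> m")
    case True
    have "\<bar>f i\<bar> = real (m choose i) * y ^ i" unfolding f_def using y0 by (simp add: abs_mult power_abs)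
    also have "\<dots> \<le> \<tau>" unfolding \<tau>_def using term_bound[OF that k2 mb b0 y0 y2] .
    finally show ?thesis using True by simp
  next
    case False then show ?thesis using f0 by simp
  qed
  have tail: "\<bar>\<Sum>i\<in>{k..<k+m+1}. f i\<bar> \<le> real m * \<tau>"
  proof -
    have "\<bar>\<Sum>i\<in>{k..<k+m+1}. f i\<bar> \<le> (\<Sum>i\<in>{k..<k+m+1}. \<bar>f i\<bar>)" by (rule sum_abs)
    also have "\<dots> \<le> (\<Sum>i\<in>{k..<k+m+1}. if i \<le> m then \<tau> else 0)"
      using fb by (intro sum_mono) auto
    also have "\<dots> = real (card {i\<in>{k..<k+m+1}. i \<le> m}) * \<tau>"
      using sum.inter_filter[of "{k..<k+m+1}" "\<lambda>_. \<tau>" "\<lambda>i. i \<le> m"] by simp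
    also have "\<dots> \<le> real m * \<tau>"
    proof (intro mult_right_mono tau0)
      have "{i\<in>{k..<k+m+1}. i \<le> m} \<subseteq> {1..m}" using k2 by auto
      then have "card {i\<in>{k..<k+m+1}. i \<le> m} \<le> card {1..m}" by (intro card_mono) auto
      then show "real (card {i\<in>{k..<k+m+1}. i \<le> m}) \<le> real m" by simp
    qed
    finally show ?thesis .
  qed
  have single: "real (m choose k) * y ^ k \<le> real m * \<tau>"
  proof (cases "k \<le> m")
    case True
    have "real (m choose k) * y ^ k \<le> \<tau>" unfolding \<tau>_def using term_bound[OF _ k2 mb b0 y0 y2] by simp
    also have "\<dots> \<le> real m * \<tau>" using True k2 tau0 by (simp add: mult_le_cancel_right1)
    finally show ?thesis .
  next
    case False then show ?thesis using tau0 by (simp add: binomial_eq_0)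
  qed
  have mt: "real m * \<tau> \<le> real m ^ 2 * 2 ^ k / (fact k * real b)"
  proof -
    have "real m * \<tau> = (real m / b) * (real m ^ 2 * 2 ^ k / (fact k * real b))"
      unfolding \<tau>_def by (simp add: field_simps power2_eq_square)
    also have "\<dots> \<le> 1 * (real m ^ 2 * 2 ^ k / (fact k * real b))"
      using mb b0 by (intro mult_right_mono) auto
    finally show ?thesis by simp
  qed
  define S2 where "S2 = (\<Sum>i\<in>{k..<k+m+1}. f i)"
  have h0: "\<bar>A - N * (1 - y) ^ m\<bar> = \<bar>(A - Tk) - N * S2\<bar>"
    unfolding split Tk_eq S2_def by (simp add: algebra_simps)
  have h1: "\<bar>(A - Tk) - N * S2\<bar> \<le> \<bar>A - Tk\<bar> + \<bar>N * S2\<bar>" by (rule abs_triangle_ineq4)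
  have h1': "\<bar>N * S2\<bar> = N * \<bar>S2\<bar>" using N0 by (simp add: abs_mult)
  have h2: "N * (real (m choose k) * y ^ k) \<le> N * (real m * \<tau>)" using single N0 by (rule mult_left_mono)
  have h3: "N * \<bar>S2\<bar> \<le> N * (real m * \<tau>)" using tail N0 unfolding S2_def by (rule mult_left_mono)
  have h4: "N * (real m * \<tau>) \<le> N * (real m ^ 2 * 2 ^ k / (fact k * real b))" using mt N0 by (rule mult_left_mono)
  have "\<bar>A - N * (1 - y) ^ m\<bar> \<le> N * (2 * (real m ^ 2 * 2 ^ k / (fact k * real b)))"
  proof -
    have h5: "N * (2 * (real m ^ 2 * 2 ^ k / (fact k * real b))) = N * (real m ^ 2 * 2 ^ k / (fact k * real b)) + N * (real m ^ 2 * 2 ^ k / (fact k * real b))"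
      by (simp add: algebra_simps)
    have h6: "N * real (m choose k) * y ^ k = N * (real (m choose k) * y ^ k)" by simp
    have lin: "\<And>a c e f g h u v :: real. \<bar>a\<bar> = \<bar>c\<bar> \<Longrightarrow> \<bar>c\<bar> \<le> e + f \<Longrightarrow> f = g \<Longrightarrow> h \<le> u \<Longrightarrow> g \<le> u \<Longrightarrow> u \<le> v \<Longrightarrow> e \<le> h \<Longrightarrow> \<bar>a\<bar> \<le> v + v"
      by linarith
    have "\<bar>A - N * (1 - y) ^ m\<bar> \<le> N * (real m ^ 2 * 2 ^ k / (fact k * real b)) + N * (real m ^ 2 * 2 ^ k / (fact k * real b))"
      by (rule lin[OF h0 h1 h1' h2 h3 h4 ATk[unfolded h6]])
    then show ?thesis by (simp only: h5)
  qed
  then show ?thesis unfolding A_def N_def y_def ev[symmetric] .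
qed



lemma pow_lin_lower:
  fixes r z :: real assumes "0 \<le> r" "0 \<le> z"
  shows "r ^ Suc n + real (Suc n) * z * r ^ n \<le> (r + z) ^ Suc n"
proof (induction n)
  case 0 then show ?case by simp
next
  case (Suc n)
  have "(r + z) * (r ^ Suc n + real (Suc n) * z * r ^ n) \<le> (r + z) * (r + z) ^ Suc n"
    using Suc assms by (intro mult_left_mono) auto
  moreover have "(r + z) * (r ^ Suc n + real (Suc n) * z * r ^ n)
     = r ^ Suc (Suc n) + real (Suc (Suc n)) * z * r ^ Suc n + real (Suc n) * z * z * r ^ n"
    by (simp add: algebra_simps)
  moreover have "0 \<le> real (Suc n) * z * z * r ^ n" using assms by simp
  ultimately show ?case by simp
qed

lemma pow_diff_le:
  fixes a c :: real assumes "0 \<le> c" "c \<le> a" "a \<le> 1"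
  shows "a ^ n - c ^ n \<le> real n * (a - c)"
proof (induction n)
  case 0 then show ?case by simp
next
  case (Suc n)
  have D: "0 \<le> a ^ n - c ^ n" using assms by (simp add: power_mono)
  have "a ^ Suc n - c ^ Suc n = a * (a ^ n - c ^ n) + c ^ n * (a - c)" by (simp add: algebra_simps)
  also have "\<dots> \<le> 1 * (a ^ n - c ^ n) + 1 * (a - c)"
  proof (intro add_mono mult_right_mono)
    show "c ^ n \<le> 1" using assms by (simp add: power_le_one)
  qed (use assms D in auto)
  also have "\<dots> \<le> real (Suc n) * (a - c)" using Suc by (simp add: algebra_simps)
  finally show ?case .
qed

lemma varbound:
  fixes b :: real and n :: nat assumes b2: "b \<ge> 2"
  shows "b * (1 - 1/b) ^ Suc n + b * (b - 1) * (1 - 2/b) ^ Suc n - b ^ 2 * (1 - 1/b) ^ (2 * Suc n)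
     \<le> real (Suc n) ^ 2 / b"
proof -
  define x where "x = 1 / b"
  define q where "q = 1 - x"
  define r where "r = 1 - 2 * x"
  define m where "m = Suc n"
  have x0: "0 < x" and xh: "x \<le> 1/2" unfolding x_def using b2 by auto
  have bx: "b * x = 1" unfolding x_def using b2 by simp
  have r0: "0 \<le> r" unfolding r_def using xh by simp
  have q0: "0 \<le> q" "q \<le> 1" unfolding q_def using x0 xh by auto
  have qr: "q ^ 2 = r + x ^ 2" unfolding q_def r_def by (simp add: power2_eq_square algebra_simps)
  have A1: "r ^ m + real m * x ^ 2 * r ^ n \<le> q ^ (2 * m)"
  proof -
    have "q ^ (2 * m) = (q ^ 2) ^ m" by (simp add: power_mult)
    also have "\<dots> = (r + x ^ 2) ^ Suc n" unfolding qr m_def ..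
    finally show ?thesis using pow_lin_lower[OF r0, of "x^2" n] unfolding m_def by simp
  qed
  have A2: "1 - q ^ m \<le> real m * x"
    using Bernoulli_inequality[of "-x" m] x0 xh unfolding q_def by simp
  have A3: "q ^ n - r ^ n \<le> real n * x"
    using pow_diff_le[OF r0, of q n] q0 unfolding q_def r_def by simp
  have bb: "0 \<le> b * (b - 1)" using b2 by simp
  have "b * q ^ m + b * (b - 1) * r ^ m - b ^ 2 * q ^ (2 * m)
      \<le> b * q ^ m + b * (b - 1) * (q ^ (2 * m) - real m * x ^ 2 * r ^ n) - b ^ 2 * q ^ (2 * m)"
    using mult_left_mono[OF _ bb, of "r ^ m" "q ^ (2 * m) - real m * x ^ 2 * r ^ n"] A1 by simp
  also have "\<dots> = b * q ^ m * (1 - q ^ m) - real m * q * r ^ n"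
  proof -
    have "b * (b - 1) * x ^ 2 = q" unfolding q_def x_def using b2 by (simp add: field_simps power2_eq_square)
    moreover have "q ^ (2 * m) = q ^ m * q ^ m" by (simp add: power_add[symmetric] mult_2)
    moreover have "b ^ 2 = b * b" by (simp add: power2_eq_square)
    ultimately show ?thesis by (simp add: algebra_simps)
  qed
  also have "\<dots> \<le> b * q ^ m * (real m * x) - real m * q * r ^ n"
    using A2 q0 b2 by (intro diff_right_mono mult_left_mono) auto
  also have "\<dots> = real m * q * (q ^ n - r ^ n)"
  proof -
    have "b * q ^ m * (real m * x) = real m * q ^ m * (b * x)" by (simp add: algebra_simps)
    also have "\<dots> = real m * q * q ^ n" unfolding bx m_def by simp
    finally show ?thesis by (simp add: algebra_simps)
  qed
  also have "\<dots> \<le> real m * 1 * (real n * x)"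
  proof -
    have "r \<le> q" unfolding r_def q_def using x0 by simp
    then have "r ^ n \<le> q ^ n" using r0 by (rule power_mono)
    then show ?thesis using A3 q0 by (intro mult_mono) auto
  qed
  also have "\<dots> \<le> real m ^ 2 / b"
    unfolding m_def x_def using b2 by (simp add: power2_eq_square field_simps)
  finally show ?thesis unfolding m_def q_def r_def x_def by simp
qed



lemma balls_bins:
  assumes fO: "finite \<Omega>" and hp: "HP \<Omega> hv D b k" and fU: "finite U" and UD: "U \<subseteq> D"
    and m: "card U = m" and m1: "1 \<le> m" and mb: "m \<le> b" and b2: "2 \<le> b" and k2: "2 \<le> k"
    and kk: "6 * real b ^ 2 * 2 ^ k \<le> fact k" and th: "0 < \<theta>"
  shows "real (card {w\<in>\<Omega>. \<theta> < \<bar>real (card {j\<in>{0..<b}. \<forall>u\<in>U. hv w u \<noteq> j}) - real b * (1 - 1 / real b) ^ m\<bar>}) * \<theta> ^ 2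
     \<le> real (card \<Omega>) * (2 * real m ^ 2 / real b)"
proof -
  define X where "X w = real (card {j\<in>{0..<b}. \<forall>u\<in>U. hv w u \<noteq> j})" for w
  define c where "c = real b * (1 - 1 / real b) ^ m"
  define N where "N = real (card \<Omega>)"
  define e1 where "e1 = (1 - 1 / real b) ^ m"
  define e2 where "e2 = (1 - 2 / real b) ^ m"
  define \<delta> where "\<delta> = real m ^ 2 * 2 ^ k / (fact k * real b)"
  define Ind where "Ind w B = (if (\<forall>u\<in>U. hv w u \<notin> B) then 1 else (0::real))" for w B
  have b0: "0 < b" using b2 by simp
  have N0: "0 \<le> N" unfolding N_def by simp
  have d0: "0 \<le> \<delta>" unfolding \<delta>_def by simp
  have e10: "0 \<le> e1" "e1 \<le> 1" unfolding e1_def using b2 by (auto intro!: power_le_one)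
  have c0: "0 \<le> c" "c \<le> real b" unfolding c_def using e10 unfolding e1_def
    by (auto simp: mult_left_le)
  have cb: "c = real b * e1" unfolding c_def e1_def ..
  have Xs: "X w = (\<Sum>j\<in>{0..<b}. Ind w {j})" for w
    unfolding X_def Ind_def by (subst card_filter_sum) auto
  have X2s: "X w ^ 2 = (\<Sum>j\<in>{0..<b}. \<Sum>j'\<in>{0..<b}. Ind w {j, j'})" for w
  proof -
    have "X w ^ 2 = (\<Sum>j\<in>{0..<b}. Ind w {j}) * (\<Sum>j'\<in>{0..<b}. Ind w {j'})"
      unfolding Xs power2_eq_square ..
    also have "\<dots> = (\<Sum>j\<in>{0..<b}. \<Sum>j'\<in>{0..<b}. Ind w {j} * Ind w {j'})"
      by (rule sum_product)
    also have "\<dots> = (\<Sum>j\<in>{0..<b}. \<Sum>j'\<in>{0..<b}. Ind w {j, j'})"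
      unfolding Ind_def by (intro sum.cong refl) auto
    finally show ?thesis .
  qed
  have EP: "\<bar>(\<Sum>w\<in>\<Omega>. Ind w B) - N * (1 - real (card B) / b) ^ m\<bar> \<le> N * (2 * \<delta>)"
    if "B \<subseteq> {0..<b}" "card B \<le> 2" for B
    unfolding Ind_def N_def \<delta>_def
    using empty_prob[OF fO hp fU UD m that k2 mb b0] by simp
  have SX: "(\<Sum>w\<in>\<Omega>. X w) \<ge> real b * (N * e1 - N * (2 * \<delta>))"
  proof -
    have "(\<Sum>w\<in>\<Omega>. X w) = (\<Sum>j\<in>{0..<b}. \<Sum>w\<in>\<Omega>. Ind w {j})"
      unfolding Xs by (rule sum.swap)
    also have "\<dots> \<ge> (\<Sum>j\<in>{0..<b}. N * e1 - N * (2 * \<delta>))"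
    proof (intro sum_mono)
      fix j assume "j \<in> {0..<b}"
      then have "\<bar>(\<Sum>w\<in>\<Omega>. Ind w {j}) - N * e1\<bar> \<le> N * (2 * \<delta>)"
        using EP[of "{j}"] unfolding e1_def by simp
      then show "N * e1 - N * (2 * \<delta>) \<le> (\<Sum>w\<in>\<Omega>. Ind w {j})" by linarith
    qed
    finally show ?thesis by simp
  qed
  have inner: "(\<Sum>j'\<in>{0..<b}. (1 - real (card {j, j'}) / b) ^ m) = real b * e2 + (e1 - e2)"
    if j: "j \<in> {0..<b}" for j
  proof -
    have "(\<Sum>j'\<in>{0..<b}. (1 - real (card {j, j'}) / b) ^ m) = (\<Sum>j'\<in>{0..<b}. e2 + (if j' = j then e1 - e2 else 0))"
      unfolding e1_def e2_def by (intro sum.cong refl) auto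
    also have "\<dots> = real b * e2 + (e1 - e2)"
      using j by (simp add: sum.distrib)
    finally show ?thesis .
  qed
  have SX2: "(\<Sum>w\<in>\<Omega>. X w ^ 2) \<le> N * (real b * e1 + real b * (real b - 1) * e2) + real b ^ 2 * (N * (2 * \<delta>))"
  proof -
    have "(\<Sum>w\<in>\<Omega>. X w ^ 2) = (\<Sum>j\<in>{0..<b}. \<Sum>j'\<in>{0..<b}. \<Sum>w\<in>\<Omega>. Ind w {j, j'})"
      unfolding X2s by (simp add: sum.swap[of _ \<Omega>])
    also have "\<dots> \<le> (\<Sum>j\<in>{0..<b}. \<Sum>j'\<in>{0..<b}. N * (1 - real (card {j, j'}) / b) ^ m + N * (2 * \<delta>))"
    proof (intro sum_mono)
      fix j j' assume "j \<in> {0..<b}" "j' \<in> {0..<b}"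
      then have "\<bar>(\<Sum>w\<in>\<Omega>. Ind w {j, j'}) - N * (1 - real (card {j, j'}) / b) ^ m\<bar> \<le> N * (2 * \<delta>)"
        by (intro EP) (auto simp: card_insert_if)
      then show "(\<Sum>w\<in>\<Omega>. Ind w {j, j'}) \<le> N * (1 - real (card {j, j'}) / b) ^ m + N * (2 * \<delta>)"
        by linarith
    qed
    also have "\<dots> = (\<Sum>j\<in>{0..<b}. N * (real b * e2 + (e1 - e2)) + real b * (N * (2 * \<delta>)))"
      by (intro sum.cong refl) (simp add: sum.distrib sum_distrib_left[symmetric] inner)
    also have "\<dots> = N * (real b * e1 + real b * (real b - 1) * e2) + real b ^ 2 * (N * (2 * \<delta>))"
      by (simp add: algebra_simps power2_eq_square)
    finally show ?thesis .
  qed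
  have var: "real b * e1 + real b * (real b - 1) * e2 - real b ^ 2 * e1 ^ 2 \<le> real m ^ 2 / real b"
  proof -
    obtain n where n: "m = Suc n" using m1 by (cases m) auto
    have "e1 ^ 2 = (1 - 1 / real b) ^ (2 * Suc n)" unfolding e1_def n by (metis power_mult mult.commute)
    then show ?thesis using varbound[of "real b" n] b2 unfolding e1_def e2_def n by simp
  qed
  have kb: "6 * real b ^ 2 * \<delta> \<le> real m ^ 2 / real b"
  proof -
    have "6 * real b ^ 2 * \<delta> = (6 * real b ^ 2 * 2 ^ k) * (real m ^ 2 / (fact k * real b))"
      unfolding \<delta>_def by (simp add: field_simps)
    also have "\<dots> \<le> fact k * (real m ^ 2 / (fact k * real b))"
      using kk by (intro mult_right_mono) auto
    also have "\<dots> = real m ^ 2 / real b" by simp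
    finally show ?thesis .
  qed
  have "(\<Sum>w\<in>\<Omega>. (X w - c) ^ 2) = (\<Sum>w\<in>\<Omega>. X w ^ 2) - 2 * c * (\<Sum>w\<in>\<Omega>. X w) + N * c ^ 2"
  proof -
    have "(\<Sum>w\<in>\<Omega>. (X w - c) ^ 2) = (\<Sum>w\<in>\<Omega>. X w ^ 2 - 2 * c * X w + c ^ 2)"
      by (intro sum.cong refl) (simp add: power2_diff algebra_simps)
    also have "\<dots> = (\<Sum>w\<in>\<Omega>. X w ^ 2) - (\<Sum>w\<in>\<Omega>. 2 * c * X w) + (\<Sum>w\<in>\<Omega>. c ^ 2)"
      by (simp add: sum.distrib sum_subtractf)
    also have "(\<Sum>w\<in>\<Omega>. 2 * c * X w) = 2 * c * (\<Sum>w\<in>\<Omega>. X w)" by (rule sum_distrib_left[symmetric])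
    finally show ?thesis unfolding N_def by simp
  qed
  also have "\<dots> \<le> N * (real b * e1 + real b * (real b - 1) * e2) + real b ^ 2 * (N * (2 * \<delta>))
       - 2 * c * (real b * (N * e1 - N * (2 * \<delta>))) + N * c ^ 2"
    using SX2 SX c0 by (smt (verit) mult_left_mono)
  also have "\<dots> = N * (real b * e1 + real b * (real b - 1) * e2 - real b ^ 2 * e1 ^ 2)
       + 2 * N * \<delta> * (real b ^ 2 + 2 * c * real b)"
    unfolding cb by (simp add: algebra_simps power2_eq_square)
  also have "\<dots> \<le> N * (real m ^ 2 / real b) + 2 * N * \<delta> * (3 * real b ^ 2)"
  proof (intro add_mono mult_left_mono)
    show "real b ^ 2 + 2 * c * real b \<le> 3 * real b ^ 2" using c0 by (simp add: power2_eq_square mult_right_mono)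
  qed (use var N0 d0 in auto)
  also have "\<dots> = N * (real m ^ 2 / real b + 6 * real b ^ 2 * \<delta>)" by (simp add: algebra_simps)
  also have "\<dots> \<le> N * (2 * real m ^ 2 / real b)"
    using kb N0 by (intro mult_left_mono) auto
  finally have S: "(\<Sum>w\<in>\<Omega>. (X w - c) ^ 2) \<le> N * (2 * real m ^ 2 / real b)" .
  define Sb where "Sb = {w\<in>\<Omega>. \<theta> < \<bar>X w - c\<bar>}"
  have "real (card Sb) * \<theta> ^ 2 = (\<Sum>w\<in>Sb. \<theta> ^ 2)" by simp
  also have "\<dots> \<le> (\<Sum>w\<in>Sb. (X w - c) ^ 2)"
  proof (intro sum_mono)
    fix w assume "w \<in> Sb"
    then have "\<theta> < \<bar>X w - c\<bar>" unfolding Sb_def by simp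
    then have "\<theta> ^ 2 \<le> \<bar>X w - c\<bar> ^ 2" using th by (intro power_mono) auto
    then show "\<theta> ^ 2 \<le> (X w - c) ^ 2" by simp
  qed
  also have "\<dots> \<le> (\<Sum>w\<in>\<Omega>. (X w - c) ^ 2)"
    unfolding Sb_def using fO by (intro sum_mono2) auto
  finally show ?thesis using S unfolding Sb_def X_def c_def N_def by simp
qed



lemma card_mod_set:
  assumes "L \<le> d" "B \<subseteq> {0..<2^L}"
  shows "card {v\<in>{0..<(2::nat)^d}. v mod 2^L \<in> B} = card B * 2 ^ (d - L)"
proof -
  define F where "F = (\<lambda>(u, w). u + 2^L * (w::nat))"
  have e: "{v\<in>{0..<(2::nat)^d}. v mod 2^L \<in> B} = F ` (B \<times> {0..<2^(d-L)})"
  proof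
    show "{v\<in>{0..<(2::nat)^d}. v mod 2^L \<in> B} \<subseteq> F ` (B \<times> {0..<2^(d-L)})"
    proof
      fix v assume v: "v \<in> {v\<in>{0..<(2::nat)^d}. v mod 2^L \<in> B}"
      have "v div 2^L < 2^(d-L)"
        using v assms(1) by (simp add: less_mult_imp_div_less power_add[symmetric])
      moreover have "v = F (v mod 2^L, v div 2^L)" unfolding F_def by simp
      ultimately show "v \<in> F ` (B \<times> {0..<2^(d-L)})" using v by force
    qed
  next
    show "F ` (B \<times> {0..<2^(d-L)}) \<subseteq> {v\<in>{0..<(2::nat)^d}. v mod 2^L \<in> B}"
    proof
      fix v assume "v \<in> F ` (B \<times> {0..<2^(d-L)})"
      then obtain u w where uw: "u \<in> B" "w < 2^(d-L)" "v = u + 2^L * w" unfolding F_def by auto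
      have u: "u < 2^L" using uw assms by auto
      have "u + 2^L * w < 2^L + 2^L * w" using u by simp
      also have "\<dots> = 2^L * (w + 1)" by simp
      also have "\<dots> \<le> 2^L * 2^(d-L)" using uw(2) by (intro mult_left_mono) auto
      also have "\<dots> = 2^d" using assms(1) by (simp add: power_add[symmetric])
      finally have "v < 2^d" using uw by simp
      moreover have "v mod 2^L = u" using u uw by simp
      ultimately show "v \<in> {v\<in>{0..<(2::nat)^d}. v mod 2^L \<in> B}" using uw by simp
    qed
  qed
  have inj: "inj_on F (B \<times> {0..<2^(d-L)})"
  proof (rule inj_onI)
    fix x y assume x: "x \<in> B \<times> {0..<2^(d-L)}" and y: "y \<in> B \<times> {0..<2^(d-L)}" and "F x = F y"
    obtain u w where "x = (u, w)" by (cases x)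
    obtain u' w' where "y = (u', w')" by (cases y)
    have "u < 2^L" "u' < 2^L" using x y assms \<open>x = (u,w)\<close> \<open>y = (u',w')\<close> by auto
    moreover have "u + 2^L * w = u' + 2^L * w'" using \<open>F x = F y\<close> \<open>x = (u,w)\<close> \<open>y = (u',w')\<close> unfolding F_def by simp
    ultimately have "(u + 2^L * w) mod 2^L = u'" "(u + 2^L * w) div 2^L = w'" by simp_all
    then show "x = y" using \<open>x = (u,w)\<close> \<open>y = (u',w')\<close> \<open>u < 2^L\<close> by simp
  qed
  have fB: "finite B" using assms(2) finite_subset by blast
  show ?thesis unfolding e card_image[OF inj] using fB by (simp add: card_cartesian_product)
qed

lemma hash_HP:
  assumes irr: "irreducible P" and dP: "degree P = d" and Ld: "L \<le> d" and kd: "k \<le> 2 ^ d"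
  shows "HP (gf_tuples d k) (\<lambda>as x. gf_poly_eval P as x mod 2 ^ L) {0..<2^d} (2 ^ L) k"
  unfolding HP_def
proof (intro allI impI)
  fix T B :: "nat set" assume T: "T \<subseteq> {0..<2^d}" and Tk: "card T \<le> k" and B: "B \<subseteq> {0..<2 ^ L}"
  define C where "C = {v\<in>{0..<(2::nat)^d}. v mod 2^L \<in> B}"
  have C: "C \<subseteq> {0..<2^d}" unfolding C_def by auto
  have cC: "card C = card B * 2 ^ (d - L)" unfolding C_def by (rule card_mod_set[OF Ld B])
  have seq: "{as \<in> gf_tuples d k. \<forall>x\<in>T. gf_poly_eval P as x mod 2 ^ L \<in> B}
      = {as \<in> gf_tuples d k. \<forall>x\<in>T. gf_poly_eval P as x \<in> C}"
    unfolding C_def using gf_poly_eval_less[OF irr dP] by auto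
  have "real (card {as \<in> gf_tuples d k. \<forall>x\<in>T. gf_poly_eval P as x mod 2 ^ L \<in> B})
      = real (card C ^ card T * (2 ^ d) ^ (k - card T))"
    unfolding seq using hash_count[OF irr dP T Tk kd C] by simp
  also have "\<dots> = (real (card B) * 2 ^ (d - L)) ^ card T * (2 ^ d) ^ (k - card T)"
    unfolding cC by simp
  also have "\<dots> = (2 ^ d) ^ k * (real (card B) / real (2 ^ L)) ^ card T"
  proof -
    have "(2::real) ^ (d - L) = 2 ^ d / 2 ^ L" using Ld by (simp add: power_diff)
    then have "real (card B) * 2 ^ (d - L) = 2 ^ d * (real (card B) / 2 ^ L)" by simp
    then have "(real (card B) * 2 ^ (d - L)) ^ card T = (2 ^ d) ^ card T * (real (card B) / 2 ^ L) ^ card T"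
      by (metis power_mult_distrib)
    moreover have "((2::real) ^ d) ^ k = (2 ^ d) ^ card T * (2 ^ d) ^ (k - card T)"
      using Tk by (simp add: power_add[symmetric])
    ultimately show ?thesis by simp
  qed
  also have "((2::real) ^ d) ^ k = real (card (gf_tuples d k))" unfolding card_gf_tuples by simp
  finally show "real (card {w \<in> gf_tuples d k. \<forall>x\<in>T. gf_poly_eval P w x mod 2 ^ L \<in> B})
      = real (card (gf_tuples d k)) * (real (card B) / real (2 ^ L)) ^ card T" .
qed



lemma fact_ge_4pow: "9 \<le> k \<Longrightarrow> (4::real) ^ k \<le> fact k"
proof (induction k rule: dec_induct)
  case base then show ?case by (simp add: fact_numeral)
next
  case (step k)
  have "(4::real) ^ Suc k = 4 * 4 ^ k" by simp
  also have "\<dots> \<le> real (Suc k) * fact k" using step by (intro mult_mono) auto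
  also have "\<dots> = fact (Suc k)" by simp
  finally show ?case .
qed

lemma ln2_bounds: "1/2 \<le> ln (2::real)" "ln (2::real) \<le> 1"
proof -
  have "ln (1/2::real) \<le> 1/2 - 1" by (rule ln_le_minus_one) simp
  then show "1/2 \<le> ln (2::real)" by (simp add: ln_div)
  show "ln (2::real) \<le> 1" using ln_le_minus_one[of "2::real"] by simp
qed

lemma params:
  assumes e0: "0 < \<epsilon>" and e1: "\<epsilon> < 1"
  shows "real (b_param \<epsilon>) \<ge> 9 * 2 ^ 23 / \<epsilon>\<^sup>2"
    and "b_param \<epsilon> = 2 ^ log_b \<epsilon>"
    and "1 \<le> log_b \<epsilon>"
    and "2 * log_b \<epsilon> + 3 \<le> k_param \<epsilon>" and "9 \<le> k_param \<epsilon>"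
    and "real (k_param \<epsilon>) \<le> 15 / 2 * real (log_b \<epsilon>) + 17"
proof -
  define x where "x = 9 * 2 ^ 23 / \<epsilon>\<^sup>2"
  have x1: "x > 1"
  proof -
    have "\<epsilon> * \<epsilon> < 1 * 1" using e0 e1 by (intro mult_strict_mono) auto
    then have "\<epsilon>\<^sup>2 < 1" by (simp add: power2_eq_square)
    then have "9 * 2 ^ 23 / \<epsilon>\<^sup>2 > (9 * 2 ^ 23 :: real)" using e0 by (simp add: field_simps)
    then show ?thesis unfolding x_def by simp
  qed
  have lg: "log 2 x > 0" using x1 by simp
  have L: "log_b \<epsilon> = nat \<lceil>log 2 x\<rceil>" unfolding log_b_def x_def ..
  have L1: "1 \<le> log_b \<epsilon>" unfolding L using lg by linarith
  then show "1 \<le> log_b \<epsilon>" .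
  show "b_param \<epsilon> = 2 ^ log_b \<epsilon>" unfolding b_param_def ..
  have "real (b_param \<epsilon>) = 2 powr real (log_b \<epsilon>)" unfolding b_param_def by (simp add: powr_realpow)
  also have "real (log_b \<epsilon>) = real_of_int \<lceil>log 2 x\<rceil>" unfolding L using lg by simp
  also have "2 powr real_of_int \<lceil>log 2 x\<rceil> \<ge> 2 powr log 2 x" by (intro powr_mono) auto
  also have "2 powr log 2 x = x" using x1 by simp
  finally show "real (b_param \<epsilon>) \<ge> 9 * 2 ^ 23 / \<epsilon>\<^sup>2" unfolding x_def .
  have lnb: "ln (real (b_param \<epsilon>)) = real (log_b \<epsilon>) * ln 2"
    unfolding b_param_def by (simp add: ln_realpow)
  have K: "k_param \<epsilon> = nat \<lceil>15 / 2 * (real (log_b \<epsilon>) * ln 2) + 16\<rceil>"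
    unfolding k_param_def lnb ..
  have lo: "real (k_param \<epsilon>) \<ge> 15 / 2 * (real (log_b \<epsilon>) * ln 2) + 16"
    unfolding K using ln2_bounds by (smt (verit) of_nat_0_le_iff real_nat_ceiling_ge)
  have "15 / 2 * (real (log_b \<epsilon>) * ln 2) \<ge> 15 / 2 * (real (log_b \<epsilon>) * (1/2))"
    using ln2_bounds by (intro mult_left_mono) auto
  then have lo2: "real (k_param \<epsilon>) \<ge> 15 / 4 * real (log_b \<epsilon>) + 16" using lo by linarith
  then show "2 * log_b \<epsilon> + 3 \<le> k_param \<epsilon>" by linarith
  show "9 \<le> k_param \<epsilon>" using lo2 by linarith
  have "15 / 2 * (real (log_b \<epsilon>) * ln 2) \<le> 15 / 2 * (real (log_b \<epsilon>) * 1)"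
    using ln2_bounds by (intro mult_left_mono) auto
  moreover have "real (k_param \<epsilon>) \<le> 15 / 2 * (real (log_b \<epsilon>) * ln 2) + 17"
  proof -
    have "0 \<le> 15 / 2 * (real (log_b \<epsilon>) * ln 2) + 16" using ln2_bounds by simp
    then show ?thesis unfolding K by linarith
  qed
  ultimately show "real (k_param \<epsilon>) \<le> 15 / 2 * real (log_b \<epsilon>) + 17" by linarith
qed



lemma bind_bound:
  assumes "\<And>x. x \<in> set_pmf M \<Longrightarrow> measure_pmf.prob (N x) S \<le> c" and c0: "0 \<le> c"
  shows "measure_pmf.prob (bind_pmf M N) S \<le> c"
proof -
  have "emeasure (measure_pmf (bind_pmf M N)) S = (\<integral>\<^sup>+x. emeasure (measure_pmf (N x)) S \<partial>measure_pmf M)"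
    by simp
  also have "\<dots> \<le> (\<integral>\<^sup>+x. ennreal c \<partial>measure_pmf M)"
  proof (rule nn_integral_mono_AE, rule AE_pmfI)
    fix x assume "x \<in> set_pmf M"
    then show "emeasure (measure_pmf (N x)) S \<le> ennreal c"
      using assms(1) by (simp add: measure_pmf.emeasure_eq_measure ennreal_leI)
  qed
  also have "\<dots> = ennreal c" by (simp add: measure_pmf.emeasure_space_1)
  finally show ?thesis using c0 by (simp add: measure_pmf.emeasure_eq_measure)
qed

lemma pair_as_bind:
  "pair_pmf A (pair_pmf B C) = bind_pmf A (\<lambda>f. bind_pmf B (\<lambda>g. map_pmf (\<lambda>h. (f, g, h)) C))"
  by (simp add: pair_pmf_def map_pmf_def bind_assoc_pmf bind_return_pmf)

lemma m_le_b:
  assumes "E1 \<epsilon> A (f, g, h)" "E2 \<epsilon> A (f, g, h)" "0 < \<epsilon>" "\<epsilon> < 1"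
  shows "real (card (R_set \<epsilon> A f)) \<le> real (b_param \<epsilon>)"
proof -
  define t where "t = t_val \<epsilon> A f"
  define s where "s = s_val \<epsilon> A f"
  define a where "a = real (card A)"
  have st: "real s \<ge> real_of_int t" unfolding s_def t_def s_val_def by simp
  have pw: "2 powr (- real s) \<le> 2 powr (- real_of_int t)" using st by (intro powr_mono) auto
  have a0: "0 \<le> a" unfolding a_def by simp
  have E1': "2 powr (- real_of_int t) * a \<le> 2 powr (-1) * real (b_param \<epsilon>)"
    using assms(1) unfolding E1_def t_def a_def by simp
  have E2': "\<bar>real (card (R_set \<epsilon> A f)) - 2 powr (- real s) * a\<bar> \<le> \<epsilon> / 3 * 2 powr (- real s) * a"
    using assms(2) unfolding E2_def s_def a_def by simp
  have "real (card (R_set \<epsilon> A f)) \<le> (1 + \<epsilon> / 3) * (2 powr (- real s) * a)"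
  proof -
    define z where "z = 2 powr (- real s) * a"
    have E2'': "\<bar>real (card (R_set \<epsilon> A f)) - z\<bar> \<le> \<epsilon> / 3 * z" using E2' unfolding z_def by (simp add: mult.assoc)
    have "real (card (R_set \<epsilon> A f)) - z \<le> \<epsilon> / 3 * z" using E2'' by (rule order_trans[OF abs_ge_self])
    then show ?thesis unfolding z_def[symmetric] by (simp add: algebra_simps)
  qed
  also have "\<dots> \<le> (4 / 3) * (2 powr (- real_of_int t) * a)"
    using assms(3,4) pw a0 by (intro mult_mono) (auto intro: mult_right_mono)
  also have "\<dots> \<le> (4 / 3) * (2 powr (-1) * real (b_param \<epsilon>))"
    using E1' by (intro mult_left_mono) auto
  also have "\<dots> \<le> real (b_param \<epsilon>)" by (simp add: powr_minus)
  finally show ?thesis .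
qed



lemma card_split: "finite J \<Longrightarrow> card {j\<in>J. P j} + card {j\<in>J. \<not> P j} = card J"
proof -
  assume fJ: "finite J"
  have "card ({j\<in>J. P j} \<union> {j\<in>J. \<not> P j}) = card {j\<in>J. P j} + card {j\<in>J. \<not> P j}"
    using fJ by (intro card_Un_disjoint) auto
  moreover have "{j\<in>J. P j} \<union> {j\<in>J. \<not> P j} = J" by auto
  ultimately show ?thesis by simp
qed

lemma key:
  fixes \<epsilon> :: real and A :: "nat set" and f g :: "nat \<Rightarrow> nat" and P3 :: "bit poly" and d3 L k :: nat
  assumes e0: "0 < \<epsilon>" and e1: "\<epsilon> < 1" and fA: "finite A"
    and irr: "irreducible P3" and dP: "degree P3 = d3" and Ld: "L \<le> d3" and kd: "k \<le> 2 ^ d3"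
    and k2: "2 \<le> k" and kk: "6 * real ((2::nat) ^ L) ^ 2 * 2 ^ k \<le> fact k"
    and bL: "b_param \<epsilon> = 2 ^ L" and bb: "real (b_param \<epsilon>) \<ge> 9 * 2 ^ 23 / \<epsilon>\<^sup>2" and L1: "1 \<le> L"
    and gb: "\<forall>x. g x < 2 ^ d3"
  shows "measure_pmf.prob (map_pmf (\<lambda>as x. gf_poly_eval P3 as x mod 2 ^ L) (pmf_of_set (gf_tuples d3 k)))
          {h. E1 \<epsilon> A (f, g, h) \<and> E2 \<epsilon> A (f, g, h) \<and> E3 \<epsilon> A (f, g, h) \<and> \<not> E4 \<epsilon> A (f, g, h)} \<le> 2 powr -6"
proof -
  define Tup where "Tup = gf_tuples d3 k"
  define F where "F as = (\<lambda>x. gf_poly_eval P3 as x mod 2 ^ L)" for as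
  define Y where "Y = {h. E1 \<epsilon> A (f, g, h) \<and> E2 \<epsilon> A (f, g, h) \<and> E3 \<epsilon> A (f, g, h) \<and> \<not> E4 \<epsilon> A (f, g, h)}"
  define b where "b = b_param \<epsilon>"
  have fT: "finite Tup" and neT: "Tup \<noteq> {}" unfolding Tup_def by (simp_all add: finite_gf_tuples gf_tuples_ne)
  have meas: "measure_pmf.prob (map_pmf F (pmf_of_set Tup)) Y = real (card {as\<in>Tup. F as \<in> Y}) / real (card Tup)"
  proof -
    have "measure_pmf.prob (map_pmf F (pmf_of_set Tup)) Y = measure_pmf.prob (pmf_of_set Tup) (F -` Y)" by simp
    also have "\<dots> = real (card (Tup \<inter> F -` Y)) / real (card Tup)" using fT neT by (simp add: measure_pmf_of_set)
    also have "Tup \<inter> F -` Y = {as\<in>Tup. F as \<in> Y}" by auto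
    finally show ?thesis .
  qed
  have b2: "2 \<le> b" unfolding b_def bL using L1
    by (metis power_increasing power_one_right zero_less_numeral one_le_numeral)
  show ?thesis
  proof (cases "Y = {}")
    case True
    then show ?thesis using meas unfolding Y_def[symmetric] F_def[symmetric] Tup_def[symmetric] by simp
  next
    case False
    then obtain h0 where h0: "h0 \<in> Y" by auto
    define R where "R = R_set \<epsilon> A f"
    define m where "m = card R"
    define U where "U = g ` R"
    have fR: "finite R" unfolding R_def R_set_def using fA by simp
    have mb: "real m \<le> real b" using m_le_b[of \<epsilon> A f g h0] h0 e0 e1 unfolding Y_def m_def R_def b_def by simp
    then have mb': "m \<le> b" by simp
    have inj: "inj_on g R" using h0 unfolding Y_def E3_def R_def by (auto intro: inj_onI)
    have cU: "card U = m" unfolding U_def m_def using card_image[OF inj] .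
    have fU: "finite U" unfolding U_def using fR by simp
    have UD: "U \<subseteq> {0..<2^d3}" unfolding U_def using gb by auto
    define X where "X h = real (card {j\<in>{0..<b}. \<forall>u\<in>U. h u \<noteq> j})" for h
    define c where "c = real b * (1 - 1 / real b) ^ m"
    define \<theta> where "\<theta> = \<epsilon> / 12 * real m"
    have pX: "real (p_val \<epsilon> A (f, g, h)) = real b - X h" for h
    proof -
      have "p_val \<epsilon> A (f, g, h) = card {j\<in>{0..<b}. \<exists>u\<in>U. h u = j}"
        unfolding p_val_def U_def R_def R_set_def b_def by (simp, metis)
      moreover have "card {j\<in>{0..<b}. \<exists>u\<in>U. h u = j} + card {j\<in>{0..<b}. \<not> (\<exists>u\<in>U. h u = j)} = b"
        using card_split[of "{0..<b}" "\<lambda>j. \<exists>u\<in>U. h u = j"] by simp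
      ultimately show ?thesis unfolding X_def by (simp add: algebra_simps)
    qed
    have rh: "rho \<epsilon> m = real b - c" unfolding rho_def c_def b_def by (simp add: algebra_simps)
    have E4X: "\<theta> < \<bar>X h - c\<bar>" if "h \<in> Y" for h
    proof -
      have "\<not> \<bar>real (p_val \<epsilon> A (f, g, h)) - rho \<epsilon> m\<bar> \<le> \<epsilon> / 12 * real m"
        using that unfolding Y_def E4_def m_def R_def by simp
      then show ?thesis unfolding pX rh \<theta>_def by (simp add: abs_minus_commute)
    qed
    have m1: "1 \<le> m"
    proof (rule ccontr)
      assume "\<not> 1 \<le> m"
      then have "m = 0" by simp
      have "\<theta> < \<bar>X h0 - c\<bar>" using E4X h0 by simp
      moreover have "U = {}" using \<open>m = 0\<close> cU fU by simp
      ultimately show False unfolding X_def c_def \<theta>_def using \<open>m = 0\<close> by simp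
    qed
    have th0: "0 < \<theta>" unfolding \<theta>_def using e0 m1 by simp
    have hp: "HP Tup F {0..<2^d3} b k" unfolding Tup_def F_def b_def bL
      using hash_HP[OF irr dP Ld kd] by simp
    have kk': "6 * real b ^ 2 * 2 ^ k \<le> fact k" using kk unfolding b_def bL by simp
    have BB: "real (card {w\<in>Tup. \<theta> < \<bar>real (card {j\<in>{0..<b}. \<forall>u\<in>U. F w u \<noteq> j}) - real b * (1 - 1 / real b) ^ m\<bar>}) * \<theta> ^ 2
       \<le> real (card Tup) * (2 * real m ^ 2 / real b)"
      by (rule balls_bins[OF fT hp fU UD cU m1 mb' b2 k2 kk' th0])
    have sub: "{as\<in>Tup. F as \<in> Y} \<subseteq> {w\<in>Tup. \<theta> < \<bar>real (card {j\<in>{0..<b}. \<forall>u\<in>U. F w u \<noteq> j}) - real b * (1 - 1 / real b) ^ m\<bar>}"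
      using E4X unfolding X_def c_def by auto
    have cY: "real (card {as\<in>Tup. F as \<in> Y}) * \<theta> ^ 2 \<le> real (card Tup) * (2 * real m ^ 2 / real b)"
    proof -
      have "card {as\<in>Tup. F as \<in> Y} \<le> card {w\<in>Tup. \<theta> < \<bar>real (card {j\<in>{0..<b}. \<forall>u\<in>U. F w u \<noteq> j}) - real b * (1 - 1 / real b) ^ m\<bar>}"
        using fT by (intro card_mono[OF _ sub]) simp
      then have "real (card {as\<in>Tup. F as \<in> Y}) * \<theta> ^ 2 \<le> real (card {w\<in>Tup. \<theta> < \<bar>real (card {j\<in>{0..<b}. \<forall>u\<in>U. F w u \<noteq> j}) - real b * (1 - 1 / real b) ^ m\<bar>}) * \<theta> ^ 2"
        by (intro mult_right_mono) auto
      then show ?thesis using BB by linarith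
    qed
    have N0: "0 < real (card Tup)" using fT neT by (simp add: card_gt_0_iff)
    have "real (card {as\<in>Tup. F as \<in> Y}) / real (card Tup) \<le> (2 * real m ^ 2 / real b) / \<theta> ^ 2"
    proof -
      define Q where "Q = real (card {as\<in>Tup. F as \<in> Y})"
      define K where "K = 2 * real m ^ 2 / real b"
      define NN where "NN = real (card Tup)"
      have t2: "0 < \<theta> ^ 2" using th0 by simp
      have "Q * \<theta> ^ 2 \<le> NN * K" using cY unfolding Q_def K_def NN_def .
      then have "Q \<le> NN * K / \<theta> ^ 2" using t2 by (simp add: pos_le_divide_eq)
      then have "Q \<le> (K / \<theta> ^ 2) * NN" by (simp add: algebra_simps)
      then have "Q / NN \<le> K / \<theta> ^ 2" using N0 unfolding NN_def by (simp add: pos_divide_le_eq)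
      then show ?thesis unfolding Q_def K_def NN_def .
    qed
    also have "\<dots> = 288 / (real b * \<epsilon> ^ 2)"
      unfolding \<theta>_def using m1 e0 b2 by (simp add: field_simps power2_eq_square)
    also have "\<dots> \<le> 288 / (9 * 2 ^ 23)"
    proof -
      have "9 * 2 ^ 23 \<le> real b * \<epsilon> ^ 2" using bb e0 unfolding b_def by (simp add: field_simps)
      then show ?thesis by (intro divide_left_mono) auto
    qed
    also have "\<dots> \<le> 2 powr -6" by (simp add: powr_minus)
    finally show ?thesis using meas unfolding Y_def[symmetric] F_def[symmetric] Tup_def[symmetric] by simp
  qed
qed



theorem lemma12:
  fixes n :: nat and \<epsilon> :: real and A :: "nat set"
    and d1 d2 d3 :: nat and P1 P2 P3 :: "bit poly"
  assumes "n \<ge> 1" and "0 < \<epsilon>" and "\<epsilon> < 1"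
    and "A \<subseteq> {0..<n}" and "A \<noteq> {}"
    \<comment> \<open>field GF(2^d1) for G_2([n])\<close>
    and "irreducible P1" and "degree P1 = d1" and "2 ^ d1 \<ge> n"
    \<comment> \<open>field GF(2^d2) for H_2([n],[2^5 b^2])\<close>
    and "irreducible P2" and "degree P2 = d2" and "2 ^ d2 \<ge> n"
    and "d2 \<ge> 5 + 2 * log_b \<epsilon>"
    \<comment> \<open>field GF(2^d3) for H_k([2^5 b^2],[b])\<close>
    and "irreducible P3" and "degree P3 = d3" and "2 ^ d3 \<ge> 2 ^ 5 * b_param \<epsilon> ^ 2"
    and "d3 \<ge> log_b \<epsilon>"
  shows "measure_pmf.prob
           (pair_pmf (G_fam P1 d1 2)
              (pair_pmf (H_fam P2 d2 2 (5 + 2 * log_b \<epsilon>))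
                        (H_fam P3 d3 (k_param \<epsilon>) (log_b \<epsilon>))))
           {\<psi>. E1 \<epsilon> A \<psi> \<and> E2 \<epsilon> A \<psi> \<and> E3 \<epsilon> A \<psi> \<and> \<not> E4 \<epsilon> A \<psi>}
         \<le> 2 powr (-6)"
proof -
  note pr = params[OF assms(2,3)]
  define L where "L = log_b \<epsilon>"
  define k where "k = k_param \<epsilon>"
  have bL: "b_param \<epsilon> = 2 ^ L" using pr(2) unfolding L_def .
  have L1: "1 \<le> L" using pr(3) unfolding L_def .
  have kL: "2 * L + 3 \<le> k" using pr(4) unfolding L_def k_def .
  have k9: "9 \<le> k" using pr(5) unfolding k_def .
  have kup: "real k \<le> 15 / 2 * real L + 17" using pr(6) unfolding L_def k_def .
  have k2: "2 \<le> k" using k9 by simp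
  have kk: "6 * real ((2::nat) ^ L) ^ 2 * 2 ^ k \<le> fact k"
  proof -
    have "6 * real ((2::nat) ^ L) ^ 2 * 2 ^ k \<le> 2 ^ (2 * L + 3) * (2::real) ^ k"
      by (simp add: power_add power_mult[symmetric] mult.commute)
    also have "\<dots> \<le> 2 ^ k * 2 ^ k" using kL by (intro mult_right_mono power_increasing) auto
    also have "\<dots> = 4 ^ k" by (simp add: power_mult_distrib[symmetric])
    also have "\<dots> \<le> fact k" using fact_ge_4pow[OF k9] .
    finally show ?thesis .
  qed
  have p2: "(2::nat) ^ (5 + 2 * L) \<le> 2 ^ d3"
  proof -
    have "(2::nat) ^ (5 + 2 * L) = 2 ^ 5 * b_param \<epsilon> ^ 2" unfolding bL by (metis power_add power_mult mult.commute)
    then show ?thesis using assms(15) by simp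
  qed
  have kd: "k \<le> 2 ^ d3"
  proof -
    have "1 + real L * 3 \<le> (1 + 3) ^ L" by (rule Bernoulli_inequality) simp
    then have "real k \<le> 32 * 4 ^ L" using kup by simp
    also have "\<dots> = real ((2::nat) ^ (5 + 2 * L))" by (simp add: power_add power_mult)
    also have "\<dots> \<le> real ((2::nat) ^ d3)" using p2 by (rule of_nat_mono)
    finally show ?thesis by linarith
  qed
  have Ld: "L \<le> d3" using assms(16) unfolding L_def .
  have bb: "real (b_param \<epsilon>) \<ge> 9 * 2 ^ 23 / \<epsilon>\<^sup>2" using pr(1) .
  have fA: "finite A" using assms(4) finite_subset by blast
  define S where "S = {\<psi>. E1 \<epsilon> A \<psi> \<and> E2 \<epsilon> A \<psi> \<and> E3 \<epsilon> A \<psi> \<and> \<not> E4 \<epsilon> A \<psi>}"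
  have H3: "H_fam P3 d3 k L = map_pmf (\<lambda>as x. gf_poly_eval P3 as x mod 2 ^ L) (pmf_of_set (gf_tuples d3 k))"
    unfolding H_fam_def ..
  have main: "measure_pmf.prob (pair_pmf (G_fam P1 d1 2) (pair_pmf (H_fam P2 d2 2 (5 + 2 * L)) (H_fam P3 d3 k L))) S
      \<le> 2 powr (-6)"
    unfolding pair_as_bind
  proof (rule bind_bound[OF _ powr_ge_zero], rule bind_bound[OF _ powr_ge_zero])
    fix f g assume g: "g \<in> set_pmf (H_fam P2 d2 2 (5 + 2 * L))"
    have gb: "\<forall>x. g x < 2 ^ d3"
    proof
      fix x
      obtain as where "g = (\<lambda>x. gf_poly_eval P2 as x mod 2 ^ (5 + 2 * L))"
        using g unfolding H_fam_def by (auto simp: finite_gf_tuples gf_tuples_ne)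
      then have "g x < 2 ^ (5 + 2 * L)" by simp
      then show "g x < 2 ^ d3" using p2 by linarith
    qed
    have "measure_pmf.prob (map_pmf (\<lambda>h. (f, g, h)) (H_fam P3 d3 k L)) S
        = measure_pmf.prob (H_fam P3 d3 k L) {h. E1 \<epsilon> A (f, g, h) \<and> E2 \<epsilon> A (f, g, h) \<and> E3 \<epsilon> A (f, g, h) \<and> \<not> E4 \<epsilon> A (f, g, h)}"
      unfolding S_def by (simp add: vimage_def)
    also have "\<dots> \<le> 2 powr -6"
      unfolding H3 by (rule key[OF assms(2,3) fA assms(13,14) Ld kd k2 kk bL bb L1 gb])
    finally show "measure_pmf.prob (map_pmf (\<lambda>h. (f, g, h)) (H_fam P3 d3 k L)) S \<le> 2 powr (-6)" by simp
  qed
  show ?thesis using main unfolding S_def L_def k_def .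
qed


end
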